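(* Let $W'\subset S_n$ be a reflection subgroup and $u\in S_n$. Then the coset $W'u$ is diamond-closed in $S_n$.
   Context: $S_n$ is the symmetric group with length $\ell$ (w.r.t. simple reflections $s_i=(i\ i{+}1)$), and $T$ its set of transpositions. A reflection subgroup is a subgroup generated by a set of transpositions. The Bruhat graph $\Gamma$ has vertex set $S_n$ and edges $w\to tw$ whenever $t\in T$, $\ell(w)<\ell(tw)$. A diamond is a subgraph of $\Gamma$ with four distinct vertices $x_1,\dots,x_4$ and edges $x_1\to x_2\to x_4$, $x_1\to x_3\to x_4$. A set $X\subset S_n$ is diamond-closed in $S_n$ if whenever $X$ contains three vertices of a diamond it contains the fourth. *)

theory Defs
  imports "HOL-Algebra.Sym_Groups" "HOL-Algebra.Coset"
begin

text \<open>S_n is sym_group n (permutations of {1..n}, multiplication = composition).\<close>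

definition transpositions :: "nat \<Rightarrow> (nat \<Rightarrow> nat) set" where
  "transpositions n = {Transposition.transpose i j | i j. i \<in> {1..n} \<and> j \<in> {1..n} \<and> i \<noteq> j}"

definition reflection_subgroup :: "nat \<Rightarrow> (nat \<Rightarrow> nat) set \<Rightarrow> bool" where
  "reflection_subgroup n W \<longleftrightarrow> (\<exists>R. R \<subseteq> transpositions n \<and> W = generate (sym_group n) R)"

text \<open>Coxeter length w.r.t. simple reflections = number of inversions.\<close>
definition perm_length :: "nat \<Rightarrow> (nat \<Rightarrow> nat) \<Rightarrow> nat" where
  "perm_length n w = card {(i, j). i \<in> {1..n} \<and> j \<in> {1..n} \<and> i < j \<and> w i > w j}"

definition bruhat_edge :: "nat \<Rightarrow> (nat \<Rightarrow> nat) \<Rightarrow> (nat \<Rightarrow> nat) \<Rightarrow> bool" where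
  "bruhat_edge n x y \<longleftrightarrow> x \<in> carrier (sym_group n) \<and>
     (\<exists>t \<in> transpositions n. y = t \<circ> x) \<and> perm_length n x < perm_length n y"

definition diamond :: "nat \<Rightarrow> (nat \<Rightarrow> nat) \<Rightarrow> (nat \<Rightarrow> nat) \<Rightarrow> (nat \<Rightarrow> nat) \<Rightarrow> (nat \<Rightarrow> nat) \<Rightarrow> bool" where
  "diamond n x1 x2 x3 x4 \<longleftrightarrow> distinct [x1, x2, x3, x4] \<and>
     bruhat_edge n x1 x2 \<and> bruhat_edge n x2 x4 \<and> bruhat_edge n x1 x3 \<and> bruhat_edge n x3 x4"

definition diamond_closed :: "nat \<Rightarrow> (nat \<Rightarrow> nat) set \<Rightarrow> bool" where
  "diamond_closed n X \<longleftrightarrow> (\<forall>x1 x2 x3 x4. diamond n x1 x2 x3 x4 \<longrightarrow>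
     card ({x1, x2, x3, x4} \<inter> X) \<ge> 3 \<longrightarrow> {x1, x2, x3, x4} \<subseteq> X)"

end

theory Submission
  imports Defs
begin

lemma transpose_eq_transpose:
  assumes "a \<noteq> b" "c \<noteq> d"
  shows "Transposition.transpose a b = Transposition.transpose c d \<longleftrightarrow> (a = c \<and> b = d) \<or> (a = d \<and> b = c)"
proof
  assume h: "Transposition.transpose a b = Transposition.transpose c d"
  have "Transposition.transpose a b a = Transposition.transpose c d a"
       "Transposition.transpose a b b = Transposition.transpose c d b"
    using h by auto
  then show "(a = c \<and> b = d) \<or> (a = d \<and> b = c)" using assms
    by (auto simp: transpose_def split: if_splits)
next
  assume "(a = c \<and> b = d) \<or> (a = d \<and> b = c)"
  then show "Transposition.transpose a b = Transposition.transpose c d"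
    by (auto simp: transpose_commute)
qed

lemma transpose_conj:
  "Transposition.transpose a1 a2 \<circ> Transposition.transpose b1 b2 \<circ> Transposition.transpose a1 a2
   = Transposition.transpose (Transposition.transpose a1 a2 b1) (Transposition.transpose a1 a2 b2)"
  by (auto simp: fun_eq_iff transpose_def)

lemma core:
  fixes a1 a2 b1 b2 c1 c2 d1 d2 :: 'a
  assumes "a1 \<noteq> a2" "b1 \<noteq> b2" "c1 \<noteq> c2" "d1 \<noteq> d2"
    and eq: "Transposition.transpose b1 b2 \<circ> Transposition.transpose a1 a2 = Transposition.transpose d1 d2 \<circ> Transposition.transpose c1 c2"
    and ne: "Transposition.transpose a1 a2 \<noteq> Transposition.transpose b1 b2"
  shows "Transposition.transpose c1 c2 = Transposition.transpose a1 a2 \<or>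
         Transposition.transpose c1 c2 = Transposition.transpose b1 b2 \<or>
         Transposition.transpose c1 c2 = Transposition.transpose a1 a2 \<circ> Transposition.transpose b1 b2 \<circ> Transposition.transpose a1 a2"
proof -
  have P: "\<And>p. Transposition.transpose b1 b2 (Transposition.transpose a1 a2 p) = Transposition.transpose d1 d2 (Transposition.transpose c1 c2 p)"
    using eq by (metis comp_apply)
  note p = P[of a1] P[of a2] P[of b1] P[of b2] P[of c1] P[of c2] P[of d1] P[of d2]
  have ne': "\<not> ((a1 = b1 \<and> a2 = b2) \<or> (a1 = b2 \<and> a2 = b1))"
    using ne by (auto simp: transpose_commute)
  have tb: "Transposition.transpose a1 a2 b1 \<noteq> Transposition.transpose a1 a2 b2"
    using assms(2) by (auto simp: transpose_def)
  show ?thesis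
    unfolding transpose_conj
    unfolding transpose_eq_transpose[OF assms(3) assms(1)] transpose_eq_transpose[OF assms(3) assms(2)]
       transpose_eq_transpose[OF assms(3) tb]
    using p ne' assms(1-4) unfolding transpose_def
    by smt
qed

lemma (in group) coset_step:
  assumes H: "subgroup H G" and x: "x \<in> H #> u" and u: "u \<in> carrier G" and t: "t \<in> carrier G"
  shows "t \<otimes> x \<in> H #> u \<longleftrightarrow> t \<in> H"
proof -
  obtain h where h: "h \<in> H" "x = h \<otimes> u" using x unfolding r_coset_def by auto
  have hc: "h \<in> carrier G" using h H subgroup.subset by blast
  show ?thesis
  proof
    assume "t \<otimes> x \<in> H #> u"
    then obtain h' where h': "h' \<in> H" "t \<otimes> x = h' \<otimes> u" unfolding r_coset_def by auto
    have h'c: "h' \<in> carrier G" using h' H subgroup.subset by blast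
    have "(t \<otimes> h) \<otimes> u = h' \<otimes> u" using h h' by (simp add: m_assoc t hc u)
    then have "t \<otimes> h = h'" using right_cancel t hc u h'c by simp
    then have "t = h' \<otimes> inv h" using t hc h'c
      by (metis inv_solve_right)
    then show "t \<in> H" using h h' H by (simp add: subgroup.m_closed subgroup.m_inv_closed)
  next
    assume "t \<in> H"
    then have "t \<otimes> h \<in> H" using h H by (simp add: subgroup.m_closed)
    moreover have "t \<otimes> x = (t \<otimes> h) \<otimes> u" using h by (simp add: m_assoc t hc u)
    ultimately show "t \<otimes> x \<in> H #> u" unfolding r_coset_def by auto
  qed
qed

lemma transp_carrier: "t \<in> transpositions n \<Longrightarrow> t \<in> carrier (sym_group n)"
  unfolding transpositions_def sym_group_carrier by (auto intro: permutes_swap_id)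

lemma transp_invol: "t \<in> transpositions n \<Longrightarrow> t \<circ> t = id"
  unfolding transpositions_def by auto

lemma core':
  assumes "ta \<in> transpositions n" "tb \<in> transpositions n" "tc \<in> transpositions n" "td \<in> transpositions n"
    and "tb \<circ> ta = td \<circ> tc" "ta \<noteq> tb"
  shows "tc = ta \<or> tc = tb \<or> tc = ta \<circ> tb \<circ> ta"
proof -
  obtain a1 a2 where a: "ta = Transposition.transpose a1 a2" "a1 \<noteq> a2" using assms(1) unfolding transpositions_def by blast
  obtain b1 b2 where b: "tb = Transposition.transpose b1 b2" "b1 \<noteq> b2" using assms(2) unfolding transpositions_def by blast
  obtain c1 c2 where c: "tc = Transposition.transpose c1 c2" "c1 \<noteq> c2" using assms(3) unfolding transpositions_def by blast
  obtain d1 d2 where d: "td = Transposition.transpose d1 d2" "d1 \<noteq> d2" using assms(4) unfolding transpositions_def by blast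
  show ?thesis using core[OF a(2) b(2) c(2) d(2)] assms(5,6) unfolding a(1) b(1) c(1) d(1) by blast
qed

lemma card3:
  assumes "card ({a,b,c,d} \<inter> X) \<ge> 3" "d \<notin> X"
  shows "a \<in> X \<and> b \<in> X \<and> c \<in> X"
proof (rule ccontr)
  assume "\<not> (a \<in> X \<and> b \<in> X \<and> c \<in> X)"
  then obtain p q where "{a,b,c,d} \<inter> X \<subseteq> {p,q}" using assms(2) by blast
  then have "card ({a,b,c,d} \<inter> X) \<le> card {p,q}" by (intro card_mono) auto
  also have "\<dots> \<le> 2" by (simp add: card_insert_le_m1)
  finally show False using assms(1) by simp
qed

theorem lemma4p3:
  fixes n :: nat and W :: "(nat \<Rightarrow> nat) set" and u :: "nat \<Rightarrow> nat"
  assumes "reflection_subgroup n W"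
    and "u \<in> carrier (sym_group n)"
  shows "diamond_closed n (W #>\<^bsub>sym_group n\<^esub> u)"
proof -
  interpret G: group "sym_group n" by (rule sym_group_is_group)
  obtain R where R: "R \<subseteq> transpositions n" "W = generate (sym_group n) R"
    using assms(1) unfolding reflection_subgroup_def by blast
  have sub: "subgroup W (sym_group n)"
    using R G.generate_is_subgroup transp_carrier by blast
  define X where "X = W #>\<^bsub>sym_group n\<^esub> u"
  have step: "t \<circ> x \<in> X \<longleftrightarrow> t \<in> W" if "x \<in> X" "t \<in> transpositions n" for x t
  proof -
    have "t \<otimes>\<^bsub>sym_group n\<^esub> x = t \<circ> x" by (simp add: sym_group_mult)
    moreover have "t \<otimes>\<^bsub>sym_group n\<^esub> x \<in> W #>\<^bsub>sym_group n\<^esub> u \<longleftrightarrow> t \<in> W"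
      using G.coset_step[OF sub _ assms(2) transp_carrier[OF that(2)]] that(1) unfolding X_def by blast
    ultimately show ?thesis unfolding X_def by simp
  qed
  have mc: "a \<circ> b \<in> W" if "a \<in> W" "b \<in> W" for a b
    using subgroup.m_closed[OF sub that] by (simp add: sym_group_mult)
  have cl: "tc \<in> W" if a: "ta \<in> transpositions n" "tb \<in> transpositions n" "tc \<in> transpositions n"
     "td \<in> transpositions n" "tb \<circ> ta = td \<circ> tc" "ta \<noteq> tb" "ta \<in> W" "tb \<in> W" for ta tb tc td
  proof -
    have "tc = ta \<or> tc = tb \<or> tc = ta \<circ> tb \<circ> ta" using core'[OF a(1-6)] .
    then show "tc \<in> W" using a(7,8) mc by auto
  qed
  have "diamond_closed n X"
    unfolding diamond_closed_def
  proof (intro allI impI)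
    fix x1 x2 x3 x4
    assume D: "diamond n x1 x2 x3 x4" and C: "3 \<le> card ({x1, x2, x3, x4} \<inter> X)"
    from D have dist: "distinct [x1, x2, x3, x4]" unfolding diamond_def by blast
    from D obtain t1 t2 t3 t4 where
      T: "t1 \<in> transpositions n" "t2 \<in> transpositions n" "t3 \<in> transpositions n" "t4 \<in> transpositions n"
      and e: "x2 = t1 \<circ> x1" "x4 = t2 \<circ> x2" "x3 = t3 \<circ> x1" "x4 = t4 \<circ> x3"
      unfolding diamond_def bruhat_edge_def by blast
    have x1c: "x1 \<in> carrier (sym_group n)" using D unfolding diamond_def bruhat_edge_def by blast
    have inv: "t1 \<circ> t1 = id" "t2 \<circ> t2 = id" "t3 \<circ> t3 = id" "t4 \<circ> t4 = id" using T transp_invol by auto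
    have bij1: "bij x1" using x1c unfolding sym_group_carrier by (rule permutes_bij)
    have "(t2 \<circ> t1) \<circ> x1 = (t4 \<circ> t3) \<circ> x1" using e by (simp add: comp_assoc)
    moreover have s: "x1 \<circ> inv' x1 = id" by (rule surj_iff[THEN iffD1, OF bij_is_surj[OF bij1]])
    ultimately have E1: "t2 \<circ> t1 = t4 \<circ> t3"
      by (metis comp_assoc comp_id)
    have E2: "t4 \<circ> t2 = t3 \<circ> t1"
    proof -
      have "t4 \<circ> t2 = t4 \<circ> (t2 \<circ> t1) \<circ> t1" using inv by (simp add: comp_assoc)
      also have "\<dots> = t3 \<circ> t1" using E1 inv by (metis comp_assoc comp_id id_comp)
      finally show ?thesis .
    qed
    have n12: "t1 \<noteq> t2"
    proof
      assume "t1 = t2"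
      then have "x4 = (t1 \<circ> t1) \<circ> x1" using e by (simp add: comp_assoc)
      then show False using inv dist by simp
    qed
    have n34: "t3 \<noteq> t4"
    proof
      assume "t3 = t4"
      then have "x4 = (t3 \<circ> t3) \<circ> x1" using e by (simp add: comp_assoc)
      then show False using inv dist by simp
    qed
    have n13: "t1 \<noteq> t3" using e dist by auto
    have n24: "t2 \<noteq> t4"
    proof
      assume "t2 = t4"
      then have "t2 \<circ> (t2 \<circ> t1) = t2 \<circ> (t2 \<circ> t3)" using E1 by simp
      then have "(t2 \<circ> t2) \<circ> t1 = (t2 \<circ> t2) \<circ> t3" by (simp add: comp_assoc)
      then show False using inv n13 by simp
    qed
    have bk: "x1 = t1 \<circ> x2"
    proof -
      have "t1 \<circ> x2 = (t1 \<circ> t1) \<circ> x1" using e by (simp add: comp_assoc)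
      then show ?thesis using inv by simp
    qed
    show "{x1, x2, x3, x4} \<subseteq> X"
    proof (rule ccontr)
      assume nsub: "\<not> {x1, x2, x3, x4} \<subseteq> X"
      show False
      proof (cases "x4 \<in> X")
        case False
        have x123: "x1 \<in> X \<and> x2 \<in> X \<and> x3 \<in> X" using card3[OF C False] .
        then have "t1 \<in> W" using step[of x1 t1] T(1) e(1) by simp
        moreover have "t3 \<in> W" using x123 step[of x1 t3] T(3) e(3) by simp
        ultimately have "t2 \<in> W" using cl[OF T(1) T(3) T(2) T(4) E2[symmetric] n13] by simp
        then show False using step[of x2 t2] x123 T(2) e(2) False by simp
      next
        case x4: True
        show False
        proof (cases "x1 \<in> X")
          case False
          have eq: "{x2, x3, x4, x1} = {x1, x2, x3, x4}" by auto
          have C': "3 \<le> card ({x2, x3, x4, x1} \<inter> X)" using C unfolding eq .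
          have x234: "x2 \<in> X \<and> x3 \<in> X \<and> x4 \<in> X" using card3[OF C' False] .
          then have "t2 \<in> W" using step[of x2 t2] T(2) e(2) by simp
          moreover have "t4 \<in> W" using x234 step[of x3 t4] T(4) e(4) by simp
          ultimately have "t1 \<in> W" using cl[OF T(2) T(4) T(1) T(3) E2 n24] by simp
          then show False using step[of x2 t1] x234 T(1) bk False by simp
        next
          case x1: True
          show False
          proof (cases "x3 \<in> X")
            case False
            have eq: "{x1, x2, x4, x3} = {x1, x2, x3, x4}" by auto
            have C': "3 \<le> card ({x1, x2, x4, x3} \<inter> X)" using C unfolding eq .
            have x124: "x1 \<in> X \<and> x2 \<in> X \<and> x4 \<in> X" using card3[OF C' False] .
            then have "t1 \<in> W" using step[of x1 t1] T(1) e(1) by simp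
            moreover have "t2 \<in> W" using x124 step[of x2 t2] T(2) e(2) by simp
            ultimately have "t3 \<in> W" using cl[OF T(1) T(2) T(3) T(4) E1 n12] by simp
            then show False using step[of x1 t3] x124 T(3) e(3) False by simp
          next
            case x3: True
            then have nx2: "x2 \<notin> X" using nsub x1 x4 by auto
            have "t3 \<in> W" using step[of x1 t3] x1 x3 T(3) e(3) by simp
            moreover have "t4 \<in> W" using step[of x3 t4] x3 x4 T(4) e(4) by simp
            ultimately have "t1 \<in> W" using cl[OF T(3) T(4) T(1) T(2) E1[symmetric] n34] by simp
            then show False using step[of x1 t1] x1 nx2 T(1) e(1) by simp
          qed
        qed
      qed
    qed
  qed
  then show ?thesis unfolding X_def .
qed

end
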